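(* Let $A>0$ and $0<v_{\mathrm{nozzle}}<1$. For every $w\ge0$, $A\,t_{\mathrm{end}}(w)^2<2/v_{\mathrm{nozzle}}$, and for every $w>0$, $$I(w)<\frac{1}{v_{\mathrm{nozzle}}\sqrt{w}}.$$ Consequently, if $B>0$ and $w>0$ satisfies $I(w)=B$, then $w\le \dfrac{1}{v_{\mathrm{nozzle}}^2B^2}$.
   Context: For $A>0$ and $w\ge0$, $v(\cdot;w):[0,\infty)\to(0,1]$ denotes the unique solution of $v'=-v^2(\sqrt{A^2t^2+w}+v)$, $v(0)=1$; it is strictly decreasing in $t$ and tends to $0$ as $t\to\infty$. For $0<v_{\mathrm{nozzle}}<1$, $t_{\mathrm{end}}(w)>0$ is the unique time with $v(t_{\mathrm{end}}(w);w)=v_{\mathrm{nozzle}}$, and $$I(w)=I(w;A,v_{\mathrm{nozzle}})=\int_0^{t_{\mathrm{end}}(w)}\frac{At\,v(t;w)}{\sqrt{A^2t^2+w}}\,dt.$$ *)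

theory Defs
  imports "HOL-Analysis.Analysis"
begin

text \<open>Solutions of the ODE v' = -v^2 (sqrt(A^2 t^2 + w) + v), v(0) = 1, on [0,\<infinity>).
  Values for t < 0 are normalised to 0 so that the solution is a unique function.\<close>

definition is_vsol :: "real \<Rightarrow> real \<Rightarrow> (real \<Rightarrow> real) \<Rightarrow> bool" where
  "is_vsol A w v \<longleftrightarrow> v 0 = 1 \<and>
     (\<forall>t\<ge>0. (v has_real_derivative (- (v t)\<^sup>2 * (sqrt (A\<^sup>2 * t\<^sup>2 + w) + v t))) (at t within {0..})) \<and>
     (\<forall>t<0. v t = 0)"

definition vsol :: "real \<Rightarrow> real \<Rightarrow> real \<Rightarrow> real" where
  "vsol A w = (THE v. is_vsol A w v)"

definition t_end :: "real \<Rightarrow> real \<Rightarrow> real \<Rightarrow> real" where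
  "t_end A vn w = (THE t. 0 \<le> t \<and> vsol A w t = vn)"

definition I_fun :: "real \<Rightarrow> real \<Rightarrow> real \<Rightarrow> real" where
  "I_fun A vn w = integral {0..t_end A vn w}
      (\<lambda>t. A * t * vsol A w t / sqrt (A\<^sup>2 * t\<^sup>2 + w))"

end

theory Submission
  imports Defs
begin

lemma ftc0:
  assumes "continuous_on {0..} f" "0 \<le> (t::real)"
  shows "((\<lambda>x. integral {0..x} f) has_real_derivative f t) (at t within {0..})"
proof -
  have "((\<lambda>x. integral {0..x} f) has_real_derivative f t) (at t within {0..t+1})"
    by (rule integral_has_real_derivative) (use assms in \<open>auto intro: continuous_on_subset\<close>)
  moreover have "at t within {0..t+1} = at t within {0..}"
    by (rule at_within_nhd[where S="{..<t+1}"]) auto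
  ultimately show ?thesis by simp
qed

lemma ftc0_cont:
  assumes "continuous_on {0..} f"
  shows "continuous_on {0..} (\<lambda>x. integral {0..x} (f::real\<Rightarrow>real))"
  by (rule DERIV_continuous_on[OF ftc0[OF assms]]) auto

definition sfun :: "real \<Rightarrow> real \<Rightarrow> real \<Rightarrow> real" where
  "sfun A w t = sqrt (A\<^sup>2 * t\<^sup>2 + w)"
definition Sfun :: "real \<Rightarrow> real \<Rightarrow> real \<Rightarrow> real" where
  "Sfun A w t = integral {0..t} (sfun A w)"
definition hh :: "real \<Rightarrow> real" where
  "hh x = 1 / max x 1"
definition gfun :: "real \<Rightarrow> real \<Rightarrow> (real \<Rightarrow> real) \<Rightarrow> real \<Rightarrow> real" where
  "gfun A w p t = hh (1 + Sfun A w t + exp (2 * t) * p t)"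
definition Phi0 :: "real \<Rightarrow> real \<Rightarrow> (real \<Rightarrow> real) \<Rightarrow> real \<Rightarrow> real" where
  "Phi0 A w p t = exp (- 2 * max 0 t) * integral {0..max 0 t} (gfun A w p)"

lemma sfun_cont: "continuous_on S (sfun A w)"
  unfolding sfun_def by (intro continuous_intros)

lemma Sfun_cont: "continuous_on {0..} (Sfun A w)"
  unfolding Sfun_def by (rule ftc0_cont[OF sfun_cont])

lemma hh_cont: "continuous_on S hh"
  unfolding hh_def by (intro continuous_intros) auto

lemma hh_pos: "0 < hh x" and hh_le1: "hh x \<le> 1"
  unfolding hh_def by auto

lemma hh_lip: "\<bar>hh a - hh b\<bar> \<le> \<bar>a - b\<bar>"
proof -
  have ma: "max a 1 \<ge> 1" and mb: "max b 1 \<ge> 1" by auto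
  have "hh a - hh b = (max b 1 - max a 1) / (max a 1 * max b 1)"
    unfolding hh_def using ma mb by (simp add: field_simps)
  hence "\<bar>hh a - hh b\<bar> = \<bar>max b 1 - max a 1\<bar> / (max a 1 * max b 1)"
    using ma mb by simp
  also have "\<dots> \<le> \<bar>max b 1 - max a 1\<bar>"
  proof -
    have pp: "1 \<le> max a 1 * max b 1" using mult_mono[OF ma mb] by simp
    show ?thesis using pp mult_left_mono[OF pp abs_ge_zero, of "max b 1 - max a 1"]
      by (simp add: divide_le_eq)
  qed
  also have "\<dots> \<le> \<bar>a - b\<bar>" by auto
  finally show ?thesis .
qed

lemma gfun_cont:
  assumes "continuous_on UNIV p"
  shows "continuous_on {0..} (gfun A w p)"
proof -
  have "continuous_on {0..} (\<lambda>t. 1 + Sfun A w t + exp (2 * t) * p t)"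
    by (intro continuous_intros Sfun_cont continuous_on_subset[OF assms]) auto
  then show ?thesis unfolding gfun_def
    by (rule continuous_on_compose2[OF hh_cont]) auto
qed


lemma Phi0_cont:
  assumes "continuous_on UNIV p"
  shows "continuous_on UNIV (Phi0 A w p)"
proof -
  have "continuous_on {0..} (\<lambda>x. exp (-2*x) * integral {0..x} (gfun A w p))"
    by (intro continuous_intros ftc0_cont gfun_cont assms)
  then have "continuous_on UNIV (\<lambda>t. (\<lambda>x. exp (-2*x) * integral {0..x} (gfun A w p)) (max 0 t))"
    by (rule continuous_on_compose2[where f="\<lambda>t. max 0 t"]) (auto intro: continuous_intros)
  then show ?thesis unfolding Phi0_def by simp
qed

lemma gint:
  assumes "continuous_on UNIV p" "0 \<le> x"
  shows "gfun A w p integrable_on {0..x}"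
  by (rule integrable_continuous_interval, rule continuous_on_subset[OF gfun_cont[OF assms(1)]]) auto

lemma integral_g_bounds:
  assumes "continuous_on UNIV p" "0 \<le> x"
  shows "0 \<le> integral {0..x} (gfun A w p) \<and> integral {0..x} (gfun A w p) \<le> x"
proof
  show "0 \<le> integral {0..x} (gfun A w p)"
    by (rule integral_nonneg[OF gint[OF assms]]) (simp add: gfun_def hh_pos less_imp_le)
  have "integral {0..x} (gfun A w p) \<le> integral {0..x} (\<lambda>_. 1)"
    by (rule integral_le[OF gint[OF assms]]) (auto simp: gfun_def hh_le1)
  then show "integral {0..x} (gfun A w p) \<le> x" using assms by simp
qed

lemma Phi0_bound:
  assumes "continuous_on UNIV p"
  shows "norm (Phi0 A w p t) \<le> 1"
proof -
  define x where "x = max 0 t"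
  have x0: "0 \<le> x" by (simp add: x_def)
  note b = integral_g_bounds[OF assms x0, of A w]
  have "x \<le> exp (2*x)" using exp_ge_add_one_self[of "2*x"] x0 by linarith
  hence "exp (-2*x) * x \<le> exp (-2*x) * exp (2*x)" by (intro mult_left_mono) auto
  also have "\<dots> = 1" by (simp add: exp_add[symmetric])
  finally have e1: "exp (-2*x) * x \<le> 1" .
  have "exp (-2*x) * integral {0..x} (gfun A w p) \<le> exp (-2*x) * x"
    by (rule mult_left_mono) (use b in auto)
  with e1 have "exp (-2*x) * integral {0..x} (gfun A w p) \<le> 1" by linarith
  moreover have "0 \<le> exp (-2*x) * integral {0..x} (gfun A w p)" using b by simp
  ultimately show ?thesis unfolding Phi0_def x_def[symmetric] by simp
qed

lemma exp_int:
  assumes "0 \<le> (x::real)"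
  shows "integral {0..x} (\<lambda>\<tau>. exp (2*\<tau>)) = (exp (2*x) - 1) / 2"
proof -
  have "((\<lambda>\<tau>. exp (2*\<tau>)) has_integral ((\<lambda>\<tau>. exp (2*\<tau>) / 2) x - (\<lambda>\<tau>. exp (2*\<tau>) / 2) 0)) {0..x}"
  proof (rule fundamental_theorem_of_calculus[OF assms])
    fix y :: real
    have "((\<lambda>\<tau>. exp (2*\<tau>) / 2) has_real_derivative exp (2*y)) (at y within {0..x})"
      by (auto intro!: derivative_eq_intros)
    then show "((\<lambda>\<tau>. exp (2*\<tau>) / 2) has_vector_derivative exp (2*y)) (at y within {0..x})"
      by (simp add: has_real_derivative_iff_has_vector_derivative)
  qed
  then show ?thesis by (simp add: integral_unique diff_divide_distrib)
qed

lemma Phi0_contr: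
  assumes p1: "continuous_on UNIV p1" and p2: "continuous_on UNIV p2"
    and D: "\<And>\<tau>. \<bar>p1 \<tau> - p2 \<tau>\<bar> \<le> D"
  shows "\<bar>Phi0 A w p1 t - Phi0 A w p2 t\<bar> \<le> D / 2"
proof -
  define x where "x = max 0 t"
  have x0: "0 \<le> x" by (simp add: x_def)
  have D0: "0 \<le> D" using D[of 0] by linarith
  have eqd: "Phi0 A w p1 t - Phi0 A w p2 t = exp (-2*x) * integral {0..x} (\<lambda>\<tau>. gfun A w p1 \<tau> - gfun A w p2 \<tau>)"
    unfolding Phi0_def x_def[symmetric]
    by (simp add: integral_diff[OF gint[OF p1 x0] gint[OF p2 x0]] right_diff_distrib)
  have bnd: "norm (integral {0..x} (\<lambda>\<tau>. gfun A w p1 \<tau> - gfun A w p2 \<tau>)) \<le> integral {0..x} (\<lambda>\<tau>. D * exp (2*\<tau>))"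
  proof (rule integral_norm_bound_integral)
    show "(\<lambda>\<tau>. gfun A w p1 \<tau> - gfun A w p2 \<tau>) integrable_on {0..x}"
      by (intro integrable_diff gint p1 p2 x0)
    show "(\<lambda>\<tau>. D * exp (2*\<tau>)) integrable_on {0..x}"
      by (intro integrable_continuous_interval continuous_intros)
    fix \<tau> assume "\<tau> \<in> {0..x}"
    have "\<bar>gfun A w p1 \<tau> - gfun A w p2 \<tau>\<bar> \<le> \<bar>exp (2*\<tau>) * p1 \<tau> - exp (2*\<tau>) * p2 \<tau>\<bar>"
      unfolding gfun_def using hh_lip[of "1 + Sfun A w \<tau> + exp (2*\<tau>) * p1 \<tau>" "1 + Sfun A w \<tau> + exp (2*\<tau>) * p2 \<tau>"] by simp
    also have "\<dots> = exp (2*\<tau>) * \<bar>p1 \<tau> - p2 \<tau>\<bar>"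
      by (simp add: right_diff_distrib[symmetric] abs_mult)
    also have "\<dots> \<le> exp (2*\<tau>) * D" using D by (intro mult_left_mono) auto
    finally show "norm (gfun A w p1 \<tau> - gfun A w p2 \<tau>) \<le> D * exp (2*\<tau>)" by (simp add: mult.commute)
  qed
  have val: "integral {0..x} (\<lambda>\<tau>. D * exp (2*\<tau>)) = D * ((exp (2*x) - 1) / 2)"
    using exp_int[OF x0] by simp
  have eq: "\<bar>Phi0 A w p1 t - Phi0 A w p2 t\<bar> = exp (-2*x) * \<bar>integral {0..x} (\<lambda>\<tau>. gfun A w p1 \<tau> - gfun A w p2 \<tau>)\<bar>"
    using eqd by (simp add: abs_mult)
  have bnd2: "\<bar>integral {0..x} (\<lambda>\<tau>. gfun A w p1 \<tau> - gfun A w p2 \<tau>)\<bar> \<le> D * ((exp (2*x) - 1) / 2)"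
    using bnd by (simp only: val real_norm_def)
  have "\<bar>Phi0 A w p1 t - Phi0 A w p2 t\<bar> \<le> exp (-2*x) * (D * ((exp (2*x) - 1) / 2))"
    unfolding eq
    using bnd2 by (intro mult_left_mono) auto
  also have "\<dots> = D / 2 * (1 - exp (-2*x))"
    by (simp add: field_simps exp_add[symmetric])
  also have "\<dots> \<le> D / 2" using D0 by (simp add: mult_left_le)
  finally show ?thesis .
qed

lemma exists_fix: "\<exists>p::real \<Rightarrow>\<^sub>C real. \<forall>t. apply_bcontfun p t = Phi0 A w (apply_bcontfun p) t"
proof -
  define Phi where "Phi p = Bcontfun (Phi0 A w (apply_bcontfun p))" for p :: "real \<Rightarrow>\<^sub>C real"
  have mem: "Phi0 A w (apply_bcontfun p) \<in> bcontfun" for p :: "real \<Rightarrow>\<^sub>C real"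
    by (rule bcontfun_normI[where b=1]) (auto intro: Phi0_cont Phi0_bound[simplified real_norm_def])
  have ap: "apply_bcontfun (Phi p) = Phi0 A w (apply_bcontfun p)" for p
    unfolding Phi_def by (rule Bcontfun_inverse[OF mem])
  have "\<forall>p q. dist (Phi p) (Phi q) \<le> 1/2 * dist p q"
  proof (intro allI)
    fix p q :: "real \<Rightarrow>\<^sub>C real"
    show "dist (Phi p) (Phi q) \<le> 1/2 * dist p q"
    proof (rule dist_bound)
      fix t
      have "\<bar>Phi0 A w (apply_bcontfun p) t - Phi0 A w (apply_bcontfun q) t\<bar> \<le> dist p q / 2"
        by (rule Phi0_contr) (auto simp: dist_real_def[symmetric] intro: dist_bounded)
      then show "dist (apply_bcontfun (Phi p) t) (apply_bcontfun (Phi q) t) \<le> 1/2 * dist p q"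
        by (simp add: ap dist_real_def)
    qed
  qed
  then obtain p where "Phi p = p" using banach_fix_type[of "1/2" Phi] by auto
  then show ?thesis using ap by metis
qed

lemma exists_u: "\<exists>u. u 0 = 1 \<and> (\<forall>t\<ge>0. (u has_real_derivative (sfun A w t + hh (u t))) (at t within {0..}))"
proof -
  obtain p :: "real \<Rightarrow>\<^sub>C real" where fp: "\<And>t. apply_bcontfun p t = Phi0 A w (apply_bcontfun p) t"
    using exists_fix by blast
  define q where "q = apply_bcontfun p"
  have qc: "continuous_on UNIV q" unfolding q_def by simp
  define z where "z t = integral {0..t} (gfun A w q)" for t
  have qz: "exp (2*t) * q t = z t" if "0 \<le> t" for t
    using fp[of t] that unfolding Phi0_def z_def q_def[symmetric]
    by (simp add: exp_minus field_simps)
  define u where "u t = 1 + Sfun A w t + z t" for t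
  have "u 0 = 1" unfolding u_def z_def Sfun_def by simp
  moreover have "(u has_real_derivative (sfun A w t + hh (u t))) (at t within {0..})" if t: "0 \<le> t" for t
  proof -
    have "(u has_real_derivative (0 + sfun A w t + gfun A w q t)) (at t within {0..})"
      unfolding u_def z_def Sfun_def
      by (intro derivative_intros ftc0 sfun_cont gfun_cont qc t)
    moreover have "gfun A w q t = hh (u t)"
      unfolding gfun_def u_def using qz[OF t] by simp
    ultimately show ?thesis by simp
  qed
  ultimately show ?thesis by blast
qed


lemma mvt0:
  assumes d: "\<And>x. 0 \<le> x \<Longrightarrow> (f has_real_derivative f' x) (at x within {0..})"
    and "0 \<le> a" "a \<le> b"
  shows "\<exists>x\<in>{a..b}. f b - f a = f' x * (b - a)"
proof -
  have "\<exists>x\<in>{a..b}. f b - f a = (\<lambda>h. f' x * h) (b - a)"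
  proof (rule mvt_very_simple[OF assms(3)])
    fix x assume "a \<le> x" "x \<le> b"
    then have "(f has_real_derivative f' x) (at x within {a..b})"
      using d[of x] assms(2) by (auto intro: DERIV_subset)
    then show "(f has_derivative (\<lambda>h. f' x * h)) (at x within {a..b})"
      by (simp add: has_field_derivative_def)
  qed
  then show ?thesis by simp
qed

lemma vsol_unique:
  assumes s1: "is_vsol A w v1" and s2: "is_vsol A w v2"
  shows "v1 = v2"
proof -
  define D1 where "D1 t = - (v1 t)\<^sup>2 * (sqrt (A\<^sup>2 * t\<^sup>2 + w) + v1 t)" for t
  define D2 where "D2 t = - (v2 t)\<^sup>2 * (sqrt (A\<^sup>2 * t\<^sup>2 + w) + v2 t)" for t
  have d1: "(v1 has_real_derivative D1 t) (at t within {0..})" if "0 \<le> t" for t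
    using s1 that unfolding is_vsol_def D1_def by auto
  have d2: "(v2 has_real_derivative D2 t) (at t within {0..})" if "0 \<le> t" for t
    using s2 that unfolding is_vsol_def D2_def by auto
  have c1: "continuous_on {0..} v1" by (rule DERIV_continuous_on[OF d1]) auto
  have c2: "continuous_on {0..} v2" by (rule DERIV_continuous_on[OF d2]) auto
  define g where "g t = (v1 t + v2 t) * sqrt (A\<^sup>2 * t\<^sup>2 + w) + ((v1 t)\<^sup>2 + v1 t * v2 t + (v2 t)\<^sup>2)" for t
  have gc: "continuous_on {0..} g" unfolding g_def by (intro continuous_intros c1 c2)
  define G where "G t = integral {0..t} g" for t
  have dG: "(G has_real_derivative g t) (at t within {0..})" if "0 \<le> t" for t
    unfolding G_def[abs_def] by (rule ftc0[OF gc that])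
  define F where "F t = (v1 t - v2 t) * exp (G t)" for t
  have dF: "(F has_real_derivative 0) (at t within {0..})" if t: "0 \<le> t" for t
  proof -
    have dd: "((\<lambda>s. v1 s - v2 s) has_real_derivative (D1 t - D2 t)) (at t within {0..})"
      by (rule DERIV_diff[OF d1[OF t] d2[OF t]])
    have de: "((\<lambda>s. exp (G s)) has_real_derivative exp (G t) * g t) (at t within {0..})"
      by (auto intro!: derivative_eq_intros dG[OF t])
    have "(F has_real_derivative ((D1 t - D2 t) * exp (G t) + (v1 t - v2 t) * (exp (G t) * g t))) (at t within {0..})"
      unfolding F_def[abs_def] using DERIV_mult[OF dd de] by (simp add: mult.commute)
    moreover have "(D1 t - D2 t) * exp (G t) + (v1 t - v2 t) * (exp (G t) * g t) = 0"
      unfolding D1_def D2_def g_def by (simp add: algebra_simps power2_eq_square)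
    ultimately show ?thesis by simp
  qed
  obtain c where c: "\<And>x. x \<in> {0..} \<Longrightarrow> F x = c"
    using has_field_derivative_zero_constant[of "{0..}" F] dF by (auto simp: convex_real_interval)
  have "F 0 = 0" using s1 s2 unfolding F_def is_vsol_def by simp
  then have "F t = 0" if "0 \<le> t" for t using c[of t] c[of 0] that by simp
  then have "v1 t = v2 t" if "0 \<le> t" for t using that unfolding F_def by simp
  moreover have "v1 t = v2 t" if "t < 0" for t using s1 s2 that unfolding is_vsol_def by simp
  ultimately show ?thesis by (intro ext) (meson not_le)
qed


lemma key:
  assumes A: "A > 0" and w: "w \<ge> 0" and vn: "0 < vn" "vn < 1"
  shows "A * (t_end A vn w)\<^sup>2 < 2 / vn \<and> (w > 0 \<longrightarrow> I_fun A vn w < 1 / (vn * sqrt w))"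
proof -
  obtain u where u0: "u 0 = 1"
    and du: "\<And>t. 0 \<le> t \<Longrightarrow> (u has_real_derivative (sfun A w t + hh (u t))) (at t within {0..})"
    using exists_u[of A w] by blast
  have s_ge: "A * t \<le> sfun A w t" if "0 \<le> t" for t
  proof -
    have "A * t = sqrt ((A * t)\<^sup>2)" using A that by simp
    also have "\<dots> \<le> sfun A w t" unfolding sfun_def using w by (simp add: power_mult_distrib)
    finally show ?thesis .
  qed
  have s_nn: "0 \<le> sfun A w t" for t unfolding sfun_def using w by simp
  have ulow: "1 + A * t\<^sup>2 / 2 \<le> u t" if t: "0 \<le> t" for t
  proof -
    have "\<exists>x\<in>{0..t}. (\<lambda>s. u s - A * s\<^sup>2 / 2) t - (\<lambda>s. u s - A * s\<^sup>2 / 2) 0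
            = (sfun A w x + hh (u x) - A * x) * (t - 0)"
      by (rule mvt0[OF _ order_refl t]) (auto intro!: derivative_eq_intros du)
    then obtain x where x: "x \<in> {0..t}"
      and eq: "u t - A * t\<^sup>2 / 2 - u 0 = (sfun A w x + hh (u x) - A * x) * t" by auto
    have "0 \<le> (sfun A w x + hh (u x) - A * x) * t"
      using s_ge[of x] hh_pos[of "u x"] x t by simp
    then show ?thesis using eq u0 by simp
  qed
  have u1: "1 \<le> u t" if "0 \<le> t" for t
  proof -
    have "0 \<le> A * t\<^sup>2 / 2" using A by simp
    then show ?thesis using ulow[OF that] by linarith
  qed
  have hu: "hh (u t) = 1 / u t" if "0 \<le> t" for t
    using u1[OF that] by (simp add: hh_def max_def)
  have umono: "u a < u b" if ab: "0 \<le> a" "a < b" for a b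
  proof -
    obtain x where x: "x \<in> {a..b}" and eq: "u b - u a = (sfun A w x + hh (u x)) * (b - a)"
      using mvt0[OF du ab(1) less_imp_le[OF ab(2)]] by blast
    have "0 < (sfun A w x + hh (u x)) * (b - a)"
      using s_nn[of x] hh_pos[of "u x"] ab by simp
    then show ?thesis using eq by simp
  qed
  have uc: "continuous_on {0..} u" by (rule DERIV_continuous_on[OF du]) auto
  define vv where "vv t = (if t < 0 then 0 else 1 / u t)" for t
  have dvv: "(vv has_real_derivative (- (vv t)\<^sup>2 * (sqrt (A\<^sup>2 * t\<^sup>2 + w) + vv t))) (at t within {0..})"
    if t: "0 \<le> t" for t
  proof -
    have un: "u t \<noteq> 0" using u1[OF t] by simp
    have "((\<lambda>s. 1 / u s) has_real_derivative (- (vv t)\<^sup>2 * (sqrt (A\<^sup>2 * t\<^sup>2 + w) + vv t))) (at t within {0..})"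
      using du[OF t] un t
      by (auto intro!: derivative_eq_intros simp: vv_def hu[OF t] sfun_def field_simps power2_eq_square)
    then show ?thesis
      by (rule has_field_derivative_transform_within[where d=1]) (use t in \<open>auto simp: vv_def\<close>)
  qed
  have isv: "is_vsol A w vv"
    unfolding is_vsol_def using dvv by (auto simp: vv_def u0)
  have vsol_eq: "vsol A w = vv"
    unfolding vsol_def by (rule the_equality[where P="is_vsol A w", OF isv]) (rule vsol_unique[OF _ isv])
  define Tb where "Tb = sqrt (2 / (A * vn))"
  have Tb0: "0 \<le> Tb" unfolding Tb_def using A vn by simp
  have "A * Tb\<^sup>2 / 2 = 1 / vn" unfolding Tb_def using A vn by simp
  then have uTb: "1 / vn \<le> u Tb" using ulow[OF Tb0] by simp
  have u0le: "u 0 \<le> 1 / vn" using u0 vn by simp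
  obtain T where T: "0 \<le> T" "T \<le> Tb" "u T = 1 / vn"
    using IVT'[of u 0 "1 / vn" Tb, OF u0le uTb Tb0 continuous_on_subset[OF uc]] by auto
  have tend: "t_end A vn w = T"
    unfolding t_end_def vsol_eq
  proof (rule the_equality)
    show "0 \<le> T \<and> vv T = vn" using T vn by (simp add: vv_def)
    fix t assume H: "0 \<le> t \<and> vv t = vn"
    have e: "1 / u t = vn" using H by (auto simp: vv_def split: if_splits)
    have "u t \<noteq> 0" using u1[of t] H by simp
    then have "u t = 1 / vn" using e vn by (auto simp: field_simps)
    then show "t = T" using umono[of t T] umono[of T t] H T by (metis less_irrefl linorder_neqE)
  qed
  have c1: "A * (t_end A vn w)\<^sup>2 < 2 / vn"
  proof -
    have "1 + A * T\<^sup>2 / 2 \<le> 1 / vn" using ulow[OF T(1)] T(3) by simp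
    then have "A * T\<^sup>2 \<le> 2 / vn - 2" by (simp add: field_simps)
    then show ?thesis unfolding tend by simp
  qed
  have c2: "I_fun A vn w < 1 / (vn * sqrt w)" if wp: "w > 0"
  proof -
    have sw: "0 < sqrt w" using wp by simp
    have pos: "0 < A\<^sup>2 * t\<^sup>2 + w" for t using wp by (simp add: add_nonneg_pos)
    have sqnz: "sqrt (A\<^sup>2 * t\<^sup>2 + w) \<noteq> 0" for t
      using pos[of t] by (metis less_irrefl real_sqrt_eq_zero_cancel_iff)
    have cvv: "continuous_on {0..T} vv"
      by (rule continuous_on_subset[OF DERIV_continuous_on[OF dvv]]) auto
    have int1: "(\<lambda>t. A * t * vv t / sqrt (A\<^sup>2 * t\<^sup>2 + w)) integrable_on {0..T}"
      by (rule integrable_continuous_interval)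
         (intro continuous_intros cvv ballI sqnz)
    have int2: "((\<lambda>t. A * t / sqrt w) has_integral
                 ((\<lambda>t. A * t\<^sup>2 / (2 * sqrt w)) T - (\<lambda>t. A * t\<^sup>2 / (2 * sqrt w)) 0)) {0..T}"
    proof (rule fundamental_theorem_of_calculus[OF T(1)])
      fix y :: real
      have "((\<lambda>t. A * t\<^sup>2 / (2 * sqrt w)) has_real_derivative A * y / sqrt w) (at y within {0..T})"
        using sw by (auto intro!: derivative_eq_intros simp: field_simps)
      then show "((\<lambda>t. A * t\<^sup>2 / (2 * sqrt w)) has_vector_derivative A * y / sqrt w) (at y within {0..T})"
        by (simp add: has_real_derivative_iff_has_vector_derivative)
    qed
    have "I_fun A vn w = integral {0..T} (\<lambda>t. A * t * vv t / sqrt (A\<^sup>2 * t\<^sup>2 + w))"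
      unfolding I_fun_def tend vsol_eq ..
    also have "\<dots> \<le> integral {0..T} (\<lambda>t. A * t / sqrt w)"
    proof (rule integral_le[OF int1 has_integral_integrable[OF int2]])
      fix t assume t: "t \<in> {0..T}"
      then have t0: "0 \<le> t" by simp
      have v01: "0 < vv t" "vv t \<le> 1" using u1[OF t0] t0 by (auto simp: vv_def)
      have at0: "0 \<le> A * t" using A t0 by simp
      have sq: "sqrt w \<le> sqrt (A\<^sup>2 * t\<^sup>2 + w)" by simp
      have "A * t * vv t / sqrt (A\<^sup>2 * t\<^sup>2 + w) \<le> A * t / sqrt (A\<^sup>2 * t\<^sup>2 + w)"
        using v01 at0 pos[of t] by (intro divide_right_mono mult_left_le) auto
      also have "\<dots> \<le> A * t / sqrt w"
        using at0 sw sq pos[of t] by (intro divide_left_mono) auto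
      finally show "A * t * vv t / sqrt (A\<^sup>2 * t\<^sup>2 + w) \<le> A * t / sqrt w" .
    qed
    also have "\<dots> = (A * T\<^sup>2 / 2) / sqrt w"
      using integral_unique[OF int2] by simp
    also have "\<dots> < (1 / vn) / sqrt w"
    proof (rule divide_strict_right_mono[OF _ sw])
      have "1 + A * T\<^sup>2 / 2 \<le> 1 / vn" using ulow[OF T(1)] T(3) by simp
      then show "A * T\<^sup>2 / 2 < 1 / vn" by simp
    qed
    also have "\<dots> = 1 / (vn * sqrt w)" by simp
    finally show ?thesis .
  qed
  show ?thesis using c1 c2 by blast
qed

theorem mainTheorem8:
  fixes A vn :: real
  assumes "A > 0" and "0 < vn" and "vn < 1"
  shows "(\<forall>w\<ge>0. A * (t_end A vn w)\<^sup>2 < 2 / vn)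
       \<and> (\<forall>w>0. I_fun A vn w < 1 / (vn * sqrt w))
       \<and> (\<forall>B w. B > 0 \<longrightarrow> w > 0 \<longrightarrow> I_fun A vn w = B \<longrightarrow> w \<le> 1 / (vn\<^sup>2 * B\<^sup>2))"
proof (intro conjI allI impI)
  fix w :: real assume "w \<ge> 0"
  then show "A * (t_end A vn w)\<^sup>2 < 2 / vn" using key assms by blast
next
  fix w :: real assume "w > 0"
  then show "I_fun A vn w < 1 / (vn * sqrt w)" using key assms by simp
next
  fix B w :: real assume B: "B > 0" and w: "w > 0" and IB: "I_fun A vn w = B"
  have "B < 1 / (vn * sqrt w)" using key[of A w vn] assms w IB by simp
  then have "sqrt w * (vn * B) < 1" using assms w B by (simp add: field_simps)
  then have "(sqrt w * (vn * B))\<^sup>2 < 1\<^sup>2"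
    by (intro power_strict_mono) (use assms w B in auto)
  then have "w * (vn\<^sup>2 * B\<^sup>2) < 1" using w by (simp add: power_mult_distrib)
  then show "w \<le> 1 / (vn\<^sup>2 * B\<^sup>2)" using assms B by (simp add: pos_le_divide_eq)
qed

end
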